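(* Assume the convex setting described in the context. Suppose that on every compact set $X\subseteq\operatorname{dom}F$ the following hold: (C1) for every $x\in X$ the moment generating function $M_x(t)=\mathbb{E}[e^{t(f_\xi(x)-F(x))}]$ is finite for all $t$ in a neighborhood of $0$; (C2) there is a measurable $\kappa:\Xi\to\mathbb{R}_+$ with $\mathbb{E}[\kappa(\xi)]=L<\infty$ such that $f_\xi$ is $\kappa(\xi)$-Lipschitz on $X$ for all $\xi$; (C3) $\mathbb{E}[e^{t\kappa(\xi)}]$ is finite for all $t$ in a neighborhood of $0$. If the set $\mathcal{X}^*$ of optimal solutions of $\inf_{x\in\mathcal X}F(x)$ is contained in the interior of $\operatorname{dom}F$, then there exist positive constants $C$ and $\beta$, independent of $N$, such that \[\mathbb{P}^N\{d(x^*(\xi^{[N]}))<1\}\le Ce^{-N\beta}.\]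
   Context: Setting: $\mathcal{X}\subseteq\mathbb{R}^n$ is a nonempty closed convex set; $\xi$ is a random vector with support $\Xi$ and distribution $\mathbb P$; for each $\xi\in\Xi$, $f_\xi:\mathbb{R}^n\to\mathbb{R}\cup\{+\infty\}$ is convex; $F(x)=\mathbb{E}[f_\xi(x)]$, with $F>-\infty$ everywhere and $F(x)<+\infty$ for some $x\in\mathcal X$; $\operatorname{dom}F=\{x:F(x)<+\infty\}$; the optimal set $\mathcal X^*$ of $\inf_{x\in\mathcal X}F(x)$ is nonempty and compact. $\xi^{[N]}=(\xi^1,\dots,\xi^N)$ is an i.i.d. sample with product measure $\mathbb P^N$, $\hat F_N(x)=\frac1N\sum_{i=1}^Nf_{\xi^i}(x)$, and $x^*(\xi^{[N]})$ is an optimal solution of the SAA problem $\inf_{x\in\mathcal X}\hat F_N(x)$ (assigned to each sample, with $\hat F_N(x^* )<+\infty$). Degree of feasibility: $d(x^*(\xi^{[N]}))=\mathbb{P}\{\xi\in\Xi:f_\xi(x^*(\xi^{[N]}))<+\infty\}$. *)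

theory Defs
  imports "HOL-Probability.Probability"
begin

definition ext_convex :: "('a::real_vector \<Rightarrow> ereal) \<Rightarrow> bool" where
  "ext_convex g \<longleftrightarrow>
     (\<forall>x y t. 0 \<le> t \<and> t \<le> 1 \<longrightarrow>
        g ((1 - t) *\<^sub>R x + t *\<^sub>R y) \<le> ereal (1 - t) * g x + ereal t * g y)"

definition ext_expectation :: "'b measure \<Rightarrow> ('b \<Rightarrow> ereal) \<Rightarrow> ereal" where
  "ext_expectation M g =
     enn2ereal (\<integral>\<^sup>+ \<omega>. e2ennreal (g \<omega>) \<partial>M) - enn2ereal (\<integral>\<^sup>+ \<omega>. e2ennreal (- g \<omega>) \<partial>M)"

definition Fobj :: "'b measure \<Rightarrow> ('b \<Rightarrow> 'a \<Rightarrow> ereal) \<Rightarrow> 'a \<Rightarrow> ereal" where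
  "Fobj M f x = ext_expectation M (\<lambda>\<omega>. f \<omega> x)"

definition domF :: "'b measure \<Rightarrow> ('b \<Rightarrow> 'a \<Rightarrow> ereal) \<Rightarrow> 'a set" where
  "domF M f = {x. Fobj M f x < \<infinity>}"

definition opt_set :: "'b measure \<Rightarrow> ('b \<Rightarrow> 'a \<Rightarrow> ereal) \<Rightarrow> 'a set \<Rightarrow> 'a set" where
  "opt_set M f X = {x \<in> X. Fobj M f x = (INF y\<in>X. Fobj M f y)}"

definition saa_obj :: "('b \<Rightarrow> 'a \<Rightarrow> ereal) \<Rightarrow> nat \<Rightarrow> (nat \<Rightarrow> 'b) \<Rightarrow> 'a \<Rightarrow> ereal" where
  "saa_obj f N s x = (\<Sum>i<N. f (s i) x) / ereal (real N)"

definition feas_degree :: "'b measure \<Rightarrow> ('b \<Rightarrow> 'a \<Rightarrow> ereal) \<Rightarrow> 'a \<Rightarrow> real" where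
  "feas_degree M f x = measure M {\<omega> \<in> space M. f \<omega> x < \<infinity>}"

end

theory Submission
  imports Defs
begin


lemma exp_quad_bound: "exp (x::real) \<le> 1 + x + x^2 * exp \<bar>x\<bar>"
proof (cases "\<bar>x\<bar> \<le> 1")
  case True
  show ?thesis
  proof (cases "x \<ge> 0")
    case True
    have "exp x \<le> 1 + x + x^2" using exp_bound[OF True] \<open>\<bar>x\<bar> \<le> 1\<close> by auto
    moreover have "x^2 * 1 \<le> x^2 * exp \<bar>x\<bar>" by (intro mult_left_mono) auto
    ultimately show ?thesis by linarith
  next
    case False
    define y where "y = -x"
    have y: "0 \<le> y" "y \<le> 1" using False \<open>\<bar>x\<bar> \<le> 1\<close> by (auto simp: y_def)
    have "exp x = 1 / exp y" by (simp add: y_def exp_minus field_simps)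
    also have "\<dots> \<le> 1 / (1 + y)" using y exp_ge_add_one_self[of y]
      by (intro divide_left_mono) auto
    also have "\<dots> \<le> 1 - y + y^2"
    proof -
      have "1 \<le> (1 + y) * (1 - y + y^2)" using y by (simp add: algebra_simps power2_eq_square power3_eq_cube)
      then show ?thesis using y by (simp add: field_simps)
    qed
    also have "\<dots> = 1 + x + x^2" by (simp add: y_def)
    also have "\<dots> \<le> 1 + x + x^2 * exp \<bar>x\<bar>" using mult_left_mono[of 1 "exp \<bar>x\<bar>" "x^2"] by simp
    finally show ?thesis .
  qed
next
  case False
  have "1 \<le> x^2" using False by (metis abs_le_square_iff abs_one linorder_le_cases one_power2 power2_abs)
  hence h: "exp \<bar>x\<bar> \<le> x^2 * exp \<bar>x\<bar>" by simp
  show ?thesis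
  proof (cases "x \<ge> 0")
    case True
    have "\<bar>x\<bar> = x" using True by simp
    then have "exp x \<le> x^2 * exp x" using h by simp
    then show ?thesis using True by linarith
  next
    case False
    have "1 - x \<le> exp \<bar>x\<bar>" using False exp_ge_add_one_self[of "-x"] by simp
    moreover have "exp x \<le> 1" using False by simp
    ultimately show ?thesis using h by linarith
  qed
qed

lemma sq_le_exp: "0 \<le> (y::real) \<Longrightarrow> y^2 \<le> 4 * exp y"
proof -
  assume y: "0 \<le> y"
  have "exp y = (exp (y/2))^2" by (simp flip: exp_of_nat_mult)
  moreover have "y/2 \<le> exp (y/2)" using exp_ge_add_one_self[of "y/2"] by linarith
  hence "(y/2)^2 \<le> (exp (y/2))^2" using y power_mono[of "y/2" "exp (y/2)" 2] by linarith
  ultimately show ?thesis by (simp add: power_divide)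
qed

lemma exp_abs_le: "exp \<bar>y::real\<bar> \<le> exp y + exp (- y)"
  by (cases "y \<ge> 0") (auto simp: add_increasing2 add_increasing)

lemma chernoff_upper:
  fixes P :: "'b measure" and h :: "'b \<Rightarrow> real"
  assumes prob: "prob_space P" and hm: "h \<in> borel_measurable P"
    and hint: "integrable P h" and h0: "(\<integral>\<omega>. h \<omega> \<partial>P) = 0"
    and dpos: "\<delta> > 0"
    and mgf: "\<forall>t. \<bar>t\<bar> < \<delta> \<longrightarrow> (\<integral>\<^sup>+\<omega>. ennreal (exp (t * h \<omega>)) \<partial>P) < \<infinity>"
    and apos: "a > 0"
  shows "\<exists>\<beta>>0. \<forall>N. measure (PiM {..<N} (\<lambda>_. P))
     {s\<in>space (PiM {..<N} (\<lambda>_. P)). real N * a \<le> (\<Sum>i<N. h (s i))} \<le> exp (- real N * \<beta>)"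
proof -
  interpret P: prob_space P by (rule prob)
  have intexp: "integrable P (\<lambda>\<omega>. exp (t * h \<omega>))" if "\<bar>t\<bar> < \<delta>" for t
    using mgf that hm by (intro integrableI_nonneg) auto
  define E where "E = (\<lambda>\<omega>. exp (\<delta>/2 * h \<omega>) + exp (- (\<delta>/2) * h \<omega>))"
  have intE: "integrable P E" unfolding E_def
    using intexp[of "\<delta>/2"] intexp[of "-(\<delta>/2)"] dpos by auto
  define D where "D = (\<integral>\<omega>. E \<omega> \<partial>P)"
  have D0: "0 \<le> D" unfolding D_def E_def by (intro integral_nonneg_AE) (auto intro: add_nonneg_nonneg)
  define c where "c = 64 / \<delta>^2 * D + 1"
  have cpos: "c > 0" unfolding c_def using D0 dpos by (simp add: add_nonneg_pos)
  have pw: "exp (t * h \<omega>) \<le> 1 + t * h \<omega> + t^2 * (64 / \<delta>^2 * E \<omega>)"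
    if t: "0 < t" "t \<le> \<delta>/4" for t \<omega>
  proof -
    let ?y = "h \<omega>"
    have "(\<delta> * \<bar>?y\<bar> / 4)^2 \<le> 4 * exp (\<delta> * \<bar>?y\<bar> / 4)"
      using dpos by (intro sq_le_exp) auto
    hence sq: "?y^2 \<le> 64 / \<delta>^2 * exp (\<delta> * \<bar>?y\<bar> / 4)"
      using dpos by (simp add: power_mult_distrib field_simps power2_abs)
    have e1: "exp (\<bar>t * ?y\<bar>) \<le> exp (\<delta> * \<bar>?y\<bar> / 4)"
      using t mult_right_mono[of "t*4" \<delta> "\<bar>h \<omega>\<bar>"] by (simp add: abs_mult algebra_simps)
    have "(t * ?y)^2 * exp \<bar>t * ?y\<bar> = t^2 * (?y^2 * exp \<bar>t * ?y\<bar>)"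
      by (simp add: power_mult_distrib)
    also have "\<dots> \<le> t^2 * (64 / \<delta>^2 * exp (\<delta> * \<bar>?y\<bar> / 4) * exp (\<delta> * \<bar>?y\<bar> / 4))"
      using sq e1 by (intro mult_left_mono mult_mono) auto
    also have "64 / \<delta>^2 * exp (\<delta> * \<bar>?y\<bar> / 4) * exp (\<delta> * \<bar>?y\<bar> / 4)
        = 64 / \<delta>^2 * exp \<bar>\<delta>/2 * ?y\<bar>"
      using dpos by (simp add: mult.assoc flip: exp_add) (simp add: abs_mult)
    also have "\<dots> \<le> 64 / \<delta>^2 * E \<omega>"
      unfolding E_def using exp_abs_le[of "\<delta>/2 * ?y"] by (intro mult_left_mono) auto
    finally have "(t * ?y)^2 * exp \<bar>t * ?y\<bar> \<le> t^2 * (64 / \<delta>^2 * E \<omega>)"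
      by (simp add: mult_left_mono)
    then show ?thesis using exp_quad_bound[of "t * ?y"] by linarith
  qed
  have Mb: "(\<integral>\<omega>. exp (t * h \<omega>) \<partial>P) \<le> exp (c * t^2)" if t: "0 < t" "t \<le> \<delta>/4" for t
  proof -
    have "(\<integral>\<omega>. exp (t * h \<omega>) \<partial>P) \<le> (\<integral>\<omega>. 1 + t * h \<omega> + t^2 * (64 / \<delta>^2 * E \<omega>) \<partial>P)"
      using t dpos pw intE hint by (intro integral_mono intexp) auto
    also have "\<dots> = 1 + t * 0 + t^2 * (64 / \<delta>^2 * D)"
      using intE hint h0 unfolding D_def by (simp add: integral_add P.prob_space)
    also have "\<dots> \<le> 1 + c * t^2" unfolding c_def by (simp add: algebra_simps)
    also have "\<dots> \<le> exp (c * t^2)" by (rule exp_ge_add_one_self)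
    finally show ?thesis .
  qed
  define t where "t = min (\<delta>/4) (a / (2 * c))"
  have tpos: "0 < t" "t \<le> \<delta>/4" using dpos apos cpos by (auto simp: t_def)
  have tc: "c * t \<le> a / 2"
  proof -
    have "t \<le> a / (2 * c)" by (simp add: t_def)
    then have "c * t \<le> c * (a / (2 * c))" using cpos by (intro mult_left_mono) auto
    also have "\<dots> = a / 2" using cpos by simp
    finally show ?thesis .
  qed
  define \<beta> where "\<beta> = t * a / 2"
  have bpos: "\<beta> > 0" using tpos apos by (simp add: \<beta>_def)
  have "\<forall>N. measure (PiM {..<N} (\<lambda>_. P))
     {s\<in>space (PiM {..<N} (\<lambda>_. P)). real N * a \<le> (\<Sum>i<N. h (s i))} \<le> exp (- real N * \<beta>)"
  proof
    fix N :: nat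
    let ?Q = "PiM {..<N} (\<lambda>_. P)"
    interpret PS: product_prob_space "\<lambda>_. P" "{..<N}"
      by unfold_locales
    define M where "M = (\<integral>\<omega>. exp (t * h \<omega>) \<partial>P)"
    have M0: "0 \<le> M" unfolding M_def by (intro integral_nonneg_AE) auto
    have intt: "integrable P (\<lambda>\<omega>. exp (t * h \<omega>))" using tpos dpos by (intro intexp) auto
    let ?u = "\<lambda>s. \<Prod>i<N. exp (t * h (s i))"
    have uint: "integrable ?Q ?u"
      by (rule PS.product_integrable_prod[where f="\<lambda>_ \<omega>. exp (t * h \<omega>)"]) (use intt in auto)
    have uI: "(\<integral>s. ?u s \<partial>?Q) = M ^ N"
      using PS.product_integral_prod[where f="\<lambda>_ \<omega>. exp (t * h \<omega>)" and I="{..<N}"] intt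
      by (simp add: M_def)
    have seteq: "{s\<in>space ?Q. real N * a \<le> (\<Sum>i<N. h (s i))} = {s\<in>space ?Q. ?u s \<ge> exp (t * (real N * a))}"
    proof -
      have "?u s = exp (t * (\<Sum>i<N. h (s i)))" for s
        by (simp add: exp_sum sum_distrib_left)
      then show ?thesis using tpos by auto
    qed
    have "measure ?Q {s\<in>space ?Q. real N * a \<le> (\<Sum>i<N. h (s i))} \<le> (\<integral>s. ?u s \<partial>?Q) / exp (t * (real N * a))"
      unfolding seteq by (intro integral_Markov_inequality_measure[OF uint, where A="space ?Q"]) (auto intro!: prod_nonneg)
    also have "\<dots> = M ^ N / exp (t * (real N * a))" using uI by simp
    also have "\<dots> \<le> exp (c * t^2) ^ N / exp (t * (real N * a))"
      using Mb[OF tpos] M0 unfolding M_def by (intro divide_right_mono power_mono) auto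
    also have "\<dots> = exp (real N * (c * t^2 - t * a))"
      by (simp add: field_simps flip: exp_of_nat_mult exp_diff)
    also have "\<dots> \<le> exp (- real N * \<beta>)"
    proof -
      have e: "c * t^2 = t * (c * t)" by (simp add: power2_eq_square)
      have "t * (c * t) \<le> t * (a / 2)" using tc tpos by (intro mult_left_mono) auto
      then have "c * t^2 - t * a \<le> - \<beta>" unfolding \<beta>_def e by simp
      then have "real N * (c * t^2 - t * a) \<le> real N * (- \<beta>)" by (intro mult_left_mono) auto
      then show ?thesis by simp
    qed
    finally show "measure ?Q {s\<in>space ?Q. real N * a \<le> (\<Sum>i<N. h (s i))} \<le> exp (- real N * \<beta>)" .
  qed
  then show ?thesis using bpos by blast
qed

lemma chernoff_both:
  fixes P :: "'b measure" and h :: "'b \<Rightarrow> real"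
  assumes prob: "prob_space P" and hm: "h \<in> borel_measurable P"
    and hint: "integrable P h" and h0: "(\<integral>\<omega>. h \<omega> \<partial>P) = 0"
    and dpos: "\<delta> > 0"
    and mgf: "\<forall>t. \<bar>t\<bar> < \<delta> \<longrightarrow> (\<integral>\<^sup>+\<omega>. ennreal (exp (t * h \<omega>)) \<partial>P) < \<infinity>"
    and apos: "a > 0"
  shows "\<exists>\<beta>>0. \<forall>N. measure (PiM {..<N} (\<lambda>_. P))
     {s\<in>space (PiM {..<N} (\<lambda>_. P)). real N * a \<le> (\<Sum>i<N. h (s i))} \<le> exp (- real N * \<beta>)
   \<and> measure (PiM {..<N} (\<lambda>_. P))
     {s\<in>space (PiM {..<N} (\<lambda>_. P)). (\<Sum>i<N. h (s i)) \<le> - (real N * a)} \<le> exp (- real N * \<beta>)"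
proof -
  obtain b1 where b1: "b1 > 0" "\<forall>N. measure (PiM {..<N} (\<lambda>_. P))
     {s\<in>space (PiM {..<N} (\<lambda>_. P)). real N * a \<le> (\<Sum>i<N. h (s i))} \<le> exp (- real N * b1)"
    using chernoff_upper[OF assms] by blast
  have mgf2: "\<forall>t. \<bar>t\<bar> < \<delta> \<longrightarrow> (\<integral>\<^sup>+\<omega>. ennreal (exp (t * (- h \<omega>))) \<partial>P) < \<infinity>"
  proof (intro allI impI)
    fix t :: real assume "\<bar>t\<bar> < \<delta>"
    then have "\<bar>-t\<bar> < \<delta>" by simp
    then show "(\<integral>\<^sup>+\<omega>. ennreal (exp (t * (- h \<omega>))) \<partial>P) < \<infinity>" using mgf[rule_format, of "-t"] by simp
  qed
  obtain b2 where b2: "b2 > 0" "\<forall>N. measure (PiM {..<N} (\<lambda>_. P))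
     {s\<in>space (PiM {..<N} (\<lambda>_. P)). real N * a \<le> (\<Sum>i<N. - h (s i))} \<le> exp (- real N * b2)"
  proof -
    have m: "(\<lambda>\<omega>. - h \<omega>) \<in> borel_measurable P" using hm by simp
    have i: "integrable P (\<lambda>\<omega>. - h \<omega>)" using hint by simp
    have z: "(\<integral>\<omega>. - h \<omega> \<partial>P) = 0" using h0 by simp
    show ?thesis using chernoff_upper[OF prob m i z dpos mgf2 apos] that by blast
  qed
  have seq: "{s\<in>space (PiM {..<N} (\<lambda>_. P)). (\<Sum>i<N. h (s i)) \<le> - (real N * a)}
     = {s\<in>space (PiM {..<N} (\<lambda>_. P)). real N * a \<le> (\<Sum>i<N. - h (s i))}" for N
    by (auto simp: sum_negf)
  show ?thesis
  proof (intro exI[of _ "min b1 b2"] conjI allI)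
    show "min b1 b2 > 0" using b1 b2 by simp
    fix N
    have e1: "exp (- real N * b1) \<le> exp (- real N * min b1 b2)"
      and e2: "exp (- real N * b2) \<le> exp (- real N * min b1 b2)"
      by (auto intro: mult_left_mono)
    show "measure (PiM {..<N} (\<lambda>_. P))
     {s\<in>space (PiM {..<N} (\<lambda>_. P)). real N * a \<le> (\<Sum>i<N. h (s i))} \<le> exp (- real N * min b1 b2)"
      using b1(2) e1 order_trans by blast
    show "measure (PiM {..<N} (\<lambda>_. P))
     {s\<in>space (PiM {..<N} (\<lambda>_. P)). (\<Sum>i<N. h (s i)) \<le> - (real N * a)} \<le> exp (- real N * min b1 b2)"
      unfolding seq using b2(2) e2 order_trans by blast
  qed
qed

lemma Fobj_real:
  fixes P :: "'b measure" and f :: "'b \<Rightarrow> 'a \<Rightarrow> ereal"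
  assumes prob: "prob_space P" and meas: "(\<lambda>\<omega>. f \<omega> x) \<in> borel_measurable P"
    and fin: "\<forall>\<omega>\<in>space P. f \<omega> x \<noteq> \<infinity> \<and> f \<omega> x \<noteq> -\<infinity>"
    and neg: "(\<integral>\<^sup>+ \<omega>. e2ennreal (- f \<omega> x) \<partial>P) < \<infinity>"
    and dom: "Fobj P f x < \<infinity>"
  shows "integrable P (\<lambda>\<omega>. real_of_ereal (f \<omega> x)) \<and> Fobj P f x = ereal (\<integral>\<omega>. real_of_ereal (f \<omega> x) \<partial>P)"
proof -
  define g where "g = (\<lambda>\<omega>. real_of_ereal (f \<omega> x))"
  have gm: "g \<in> borel_measurable P" unfolding g_def using meas by measurable
  have fe: "f \<omega> x = ereal (g \<omega>)" if "\<omega> \<in> space P" for \<omega>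
  proof -
    have "f \<omega> x \<noteq> \<infinity>" "f \<omega> x \<noteq> -\<infinity>" using fin that by auto
    then show ?thesis unfolding g_def by (cases "f \<omega> x") auto
  qed
  define A where "A = (\<integral>\<^sup>+ \<omega>. ennreal (g \<omega>) \<partial>P)"
  define B where "B = (\<integral>\<^sup>+ \<omega>. ennreal (- g \<omega>) \<partial>P)"
  have A: "(\<integral>\<^sup>+ \<omega>. e2ennreal (f \<omega> x) \<partial>P) = A" unfolding A_def
    by (intro nn_integral_cong) (simp add: fe)
  have B: "(\<integral>\<^sup>+ \<omega>. e2ennreal (- f \<omega> x) \<partial>P) = B" unfolding B_def
    by (intro nn_integral_cong) (simp add: fe)
  have Bfin: "B < \<infinity>" using neg B by simp
  obtain q where q: "B = ennreal q" "0 \<le> q" using Bfin by (cases B) auto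
  have Fe: "Fobj P f x = enn2ereal A - enn2ereal B"
    by (simp only: Fobj_def ext_expectation_def A B)
  have Afin: "A < \<infinity>"
  proof (rule ccontr)
    assume "\<not> A < \<infinity>"
    then have At: "A = top" by (simp add: less_top[symmetric])
    have "Fobj P f x = \<infinity>" unfolding Fe At q(1) by simp
    then show False using dom by simp
  qed
  obtain r where r: "A = ennreal r" "0 \<le> r" using Afin by (cases A) auto
  have "(\<integral>\<^sup>+ \<omega>. ennreal (norm (g \<omega>)) \<partial>P) = (\<integral>\<^sup>+ \<omega>. ennreal (g \<omega>) + ennreal (- g \<omega>) \<partial>P)"
  proof (intro nn_integral_cong)
    fix \<omega>
    show "ennreal (norm (g \<omega>)) = ennreal (g \<omega>) + ennreal (- g \<omega>)"
      by (cases "g \<omega> \<ge> 0") (simp_all add: ennreal_neg)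
  qed
  also have "\<dots> = A + B" unfolding A_def B_def using gm by (intro nn_integral_add) auto
  finally have "(\<integral>\<^sup>+ \<omega>. ennreal (norm (g \<omega>)) \<partial>P) < \<infinity>" using r q by simp
  then have gi: "integrable P g" using gm by (intro integrableI_bounded) auto
  have "integral\<^sup>L P g = enn2real A - enn2real B"
    unfolding A_def B_def by (rule real_lebesgue_integral_def[OF gi])
  then have "Fobj P f x = ereal (integral\<^sup>L P g)" using Fe r q by simp
  then show ?thesis using gi unfolding g_def by simp
qed




theorem theorem3p3:
  fixes P :: "'b measure" and f :: "'b \<Rightarrow> 'a::euclidean_space \<Rightarrow> ereal"
    and X :: "'a set" and xstar :: "nat \<Rightarrow> (nat \<Rightarrow> 'b) \<Rightarrow> 'a"
  assumes prob: "prob_space P"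
    and X_closed: "closed X" and X_convex: "convex X" and X_ne: "X \<noteq> {}"
    and f_convex: "\<forall>\<omega>\<in>space P. ext_convex (f \<omega>)"
    and f_not_minf: "\<forall>\<omega>\<in>space P. \<forall>x. f \<omega> x \<noteq> -\<infinity>"
    and f_meas: "\<forall>x. (\<lambda>\<omega>. f \<omega> x) \<in> borel_measurable P"
    and F_not_minf: "\<forall>x. (\<integral>\<^sup>+ \<omega>. e2ennreal (- f \<omega> x) \<partial>P) < \<infinity>"
    and F_finite_somewhere: "\<exists>x\<in>X. Fobj P f x < \<infinity>"
    and opt_ne: "opt_set P f X \<noteq> {}" and opt_compact: "compact (opt_set P f X)"
    and saa_opt: "\<forall>N>0. \<forall>s\<in>space (PiM {..<N} (\<lambda>_. P)).
        xstar N s \<in> X \<and> saa_obj f N s (xstar N s) < \<infinity> \<and>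
        (\<forall>y\<in>X. saa_obj f N s (xstar N s) \<le> saa_obj f N s y)"
    and cond: "\<forall>K. compact K \<and> K \<subseteq> domF P f \<longrightarrow>
        (\<forall>x\<in>K. \<exists>\<delta>>0. \<forall>t. \<bar>t\<bar> < \<delta> \<longrightarrow>
            (\<integral>\<^sup>+ \<omega>. ennreal (exp (t * (real_of_ereal (f \<omega> x) - real_of_ereal (Fobj P f x)))) \<partial>P) < \<infinity>)
      \<and> (\<exists>\<kappa>::'b \<Rightarrow> real. \<kappa> \<in> borel_measurable P \<and> (\<forall>\<omega>\<in>space P. 0 \<le> \<kappa> \<omega>) \<and> integrable P \<kappa>
           \<and> (\<forall>\<omega>\<in>space P. (\<forall>x\<in>K. f \<omega> x \<noteq> \<infinity>)
                 \<and> lipschitz_on (\<kappa> \<omega>) K (\<lambda>x. real_of_ereal (f \<omega> x)))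
           \<and> (\<exists>\<delta>>0. \<forall>t. \<bar>t\<bar> < \<delta> \<longrightarrow> (\<integral>\<^sup>+ \<omega>. ennreal (exp (t * \<kappa> \<omega>)) \<partial>P) < \<infinity>))"
    and opt_interior: "opt_set P f X \<subseteq> interior (domF P f)"
  shows "\<exists>C>0. \<exists>\<beta>>0. \<forall>N>0. \<exists>A\<in>sets (PiM {..<N} (\<lambda>_. P)).
           {s \<in> space (PiM {..<N} (\<lambda>_. P)). feas_degree P f (xstar N s) < 1} \<subseteq> A
           \<and> measure (PiM {..<N} (\<lambda>_. P)) A \<le> C * exp (- real N * \<beta>)"
proof -
  interpret P: prob_space P by (rule prob)
  define S where "S = opt_set P f X"
  define D where "D = domF P f"
  define fr where "fr = (\<lambda>\<omega> x. real_of_ereal (f \<omega> x))"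
  have Scomp: "compact S" and Sne: "S \<noteq> {}" and SD: "S \<subseteq> interior D"
    using opt_compact opt_ne opt_interior by (auto simp: S_def D_def)
  have SX: "S \<subseteq> X" by (auto simp: S_def opt_set_def)
  note fm[measurable] = f_meas[rule_format]
  have domfin: "f \<omega> x \<noteq> \<infinity>" if "x \<in> D" "\<omega> \<in> space P" for x \<omega>
  proof -
    have "compact {x} \<and> {x} \<subseteq> domF P f" using that by (auto simp: D_def)
    from cond[rule_format, OF this] obtain \<kappa> :: "'b \<Rightarrow> real" where
      "\<forall>\<omega>\<in>space P. (\<forall>x'\<in>{x}. f \<omega> x' \<noteq> \<infinity>) \<and> lipschitz_on (\<kappa> \<omega>) {x} (\<lambda>x. real_of_ereal (f \<omega> x))"
      by (elim conjE exE) 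
    then show ?thesis using that(2) by auto
  qed
  have Frep: "integrable P (\<lambda>\<omega>. fr \<omega> x) \<and> Fobj P f x = ereal (\<integral>\<omega>. fr \<omega> x \<partial>P)" if "x \<in> D" for x
    unfolding fr_def
  proof (rule Fobj_real[OF prob])
    show "\<forall>\<omega>\<in>space P. f \<omega> x \<noteq> \<infinity> \<and> f \<omega> x \<noteq> - \<infinity>" using domfin[OF that] f_not_minf by auto
    show "Fobj P f x < \<infinity>" using that by (simp add: D_def domF_def)
  qed (use F_not_minf in auto)
  define Fr where "Fr = (\<lambda>x. \<integral>\<omega>. fr \<omega> x \<partial>P)"
  obtain \<epsilon> where epos: "\<epsilon> > 0" and epsD: "\<And>x. infdist x S \<le> \<epsilon> \<Longrightarrow> x \<in> D"
  proof (cases "interior D = UNIV")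
    case True
    show ?thesis by (rule that[of 1]) (use True interior_subset in auto)
  next
    case False
    let ?U = "interior D"
    have cl: "closed (- ?U)" by auto
    have ne: "- ?U \<noteq> {}" using False by auto
    obtain a b where ab: "a \<in> S" "b \<in> - ?U" "dist a b = setdist S (- ?U)"
      using setdist_compact_closed[OF Scomp cl Sne ne] by blast
    have "a \<noteq> b" using ab SD by auto
    then have sp: "setdist S (- ?U) > 0" using ab(3) zero_less_dist_iff by metis
    show ?thesis
    proof (rule that[of "setdist S (- ?U) / 2"])
      show "setdist S (- ?U) / 2 > 0" using sp by simp
      fix x assume x: "infdist x S \<le> setdist S (- ?U) / 2"
      obtain s where s: "s \<in> S" "infdist x S = dist x s"
        using infdist_attains_inf[OF compact_imp_closed[OF Scomp] Sne] by metis
      have "x \<in> ?U"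
      proof (rule ccontr)
        assume "x \<notin> ?U"
        then have "setdist S (- ?U) \<le> dist s x" using s by (intro setdist_le_dist) auto
        then show False using x s sp by (simp add: dist_commute)
      qed
      then show "x \<in> D" using interior_subset by blast
    qed
  qed
  obtain x0 where x0S: "x0 \<in> S" using Sne by blast
  define B where "B = {x\<in>X. infdist x S = \<epsilon>}"
  define K where "K = insert x0 B"
  have Bcomp: "compact B"
  proof -
    have "B = {x. infdist x S \<le> \<epsilon>} \<inter> (X \<inter> {x. infdist x S = \<epsilon>})"
      unfolding B_def by auto
    moreover have "compact {x. infdist x S \<le> \<epsilon>}" by (rule compact_infdist_le[OF Sne Scomp epos])
    moreover have "closed {x. infdist x S = \<epsilon>}"
      by (intro closed_Collect_eq continuous_on_infdist continuous_intros)
    moreover have "closed (X \<inter> {x. infdist x S = \<epsilon>})" by (rule closed_Int[OF X_closed]) fact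
    ultimately show ?thesis by (simp add: compact_Int_closed)
  qed
  have Kcomp: "compact K" unfolding K_def using Bcomp by simp
  have BD: "B \<subseteq> D" unfolding B_def using epsD by auto
  have x0D: "x0 \<in> D" using x0S SD interior_subset by blast
  have KD: "K \<subseteq> D" unfolding K_def using BD x0D by auto
  have BX: "B \<subseteq> X" unfolding B_def by auto
  have BS: "B \<inter> S = {}" unfolding B_def using epos by auto
  obtain \<kappa> \<delta>\<kappa> where
    mgfK: "\<forall>x\<in>K. \<exists>\<delta>>0. \<forall>t. \<bar>t\<bar> < \<delta> \<longrightarrow>
            (\<integral>\<^sup>+ \<omega>. ennreal (exp (t * (fr \<omega> x - real_of_ereal (Fobj P f x)))) \<partial>P) < \<infinity>"
    and km[measurable]: "\<kappa> \<in> borel_measurable P" and k0: "\<forall>\<omega>\<in>space P. 0 \<le> \<kappa> \<omega>"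
    and ki: "integrable P \<kappa>"
    and klip: "\<forall>\<omega>\<in>space P. lipschitz_on (\<kappa> \<omega>) K (\<lambda>x. fr \<omega> x)"
    and dk: "\<delta>\<kappa> > 0" and mgfk: "\<forall>t. \<bar>t\<bar> < \<delta>\<kappa> \<longrightarrow> (\<integral>\<^sup>+ \<omega>. ennreal (exp (t * \<kappa> \<omega>)) \<partial>P) < \<infinity>"
  proof -
    have "compact K \<and> K \<subseteq> domF P f" using Kcomp KD by (simp add: D_def)
    note c = cond[rule_format, OF this]
    from c have c1: "\<forall>x\<in>K. \<exists>\<delta>>0. \<forall>t. \<bar>t\<bar> < \<delta> \<longrightarrow>
            (\<integral>\<^sup>+ \<omega>. ennreal (exp (t * (fr \<omega> x - real_of_ereal (Fobj P f x)))) \<partial>P) < \<infinity>"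
      unfolding fr_def by (elim conjE)
    from c obtain \<kappa> :: "'b \<Rightarrow> real" and \<delta>\<kappa> where
      "\<kappa> \<in> borel_measurable P" "\<forall>\<omega>\<in>space P. 0 \<le> \<kappa> \<omega>" "integrable P \<kappa>"
      "\<forall>\<omega>\<in>space P. (\<forall>x\<in>K. f \<omega> x \<noteq> \<infinity>) \<and> lipschitz_on (\<kappa> \<omega>) K (\<lambda>x. real_of_ereal (f \<omega> x))"
      "\<delta>\<kappa> > 0" "\<forall>t. \<bar>t\<bar> < \<delta>\<kappa> \<longrightarrow> (\<integral>\<^sup>+ \<omega>. ennreal (exp (t * \<kappa> \<omega>)) \<partial>P) < \<infinity>"
      by (elim conjE exE)
    then show ?thesis using that[OF c1] unfolding fr_def by blast
  qed
  have Fint: "integrable P (\<lambda>\<omega>. fr \<omega> x)" and FobjE: "Fobj P f x = ereal (Fr x)" if "x \<in> D" for x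
    using Frep[OF that] unfolding Fr_def by auto
  have frm[measurable]: "(\<lambda>\<omega>. fr \<omega> x) \<in> borel_measurable P" for x unfolding fr_def by measurable
  define L where "L = (\<integral>\<omega>. \<kappa> \<omega> \<partial>P)"
  have L0: "0 \<le> L" unfolding L_def using k0 by (intro integral_nonneg_AE) auto
  have FrLip: "\<bar>Fr x - Fr y\<bar> \<le> L * dist x y" if "x \<in> K" "y \<in> K" for x y
  proof -
    have xD: "x \<in> D" and yD: "y \<in> D" using that KD by auto
    have "Fr x - Fr y = (\<integral>\<omega>. fr \<omega> x - fr \<omega> y \<partial>P)"
      unfolding Fr_def using Fint[OF xD] Fint[OF yD] by simp
    also have "\<bar>\<dots>\<bar> \<le> (\<integral>\<omega>. \<bar>fr \<omega> x - fr \<omega> y\<bar> \<partial>P)"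
      using integral_norm_bound[of P "\<lambda>\<omega>. fr \<omega> x - fr \<omega> y"] by simp
    also have "\<dots> \<le> (\<integral>\<omega>. \<kappa> \<omega> * dist x y \<partial>P)"
    proof (rule integral_mono)
      show "integrable P (\<lambda>\<omega>. \<bar>fr \<omega> x - fr \<omega> y\<bar>)" using Fint[OF xD] Fint[OF yD] by simp
      show "integrable P (\<lambda>\<omega>. \<kappa> \<omega> * dist x y)" using ki by simp
      fix \<omega> assume "\<omega> \<in> space P"
      then have "dist (fr \<omega> x) (fr \<omega> y) \<le> \<kappa> \<omega> * dist x y"
        using klip that by (intro lipschitz_onD) auto
      then show "\<bar>fr \<omega> x - fr \<omega> y\<bar> \<le> \<kappa> \<omega> * dist x y" by (simp add: dist_real_def)
    qed
    also have "\<dots> = L * dist x y" unfolding L_def by simp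
    finally show ?thesis .
  qed
  have FrB: "Fr x0 < Fr z" if "z \<in> B" for z
  proof -
    have zX: "z \<in> X" and zS: "z \<notin> S" using that BX BS by auto
    have "Fobj P f x0 = (INF y\<in>X. Fobj P f y)" using x0S by (simp add: S_def opt_set_def)
    also have "\<dots> \<le> Fobj P f z" using zX by (rule INF_lower)
    finally have le: "Fobj P f x0 \<le> Fobj P f z" .
    have "Fobj P f z \<noteq> (INF y\<in>X. Fobj P f y)" using zS zX by (simp add: S_def opt_set_def)
    then have "Fobj P f x0 \<noteq> Fobj P f z" using x0S by (simp add: S_def opt_set_def)
    then have "Fobj P f x0 < Fobj P f z" using le by simp
    then show ?thesis using FobjE[OF x0D] FobjE[of z] that BD by auto
  qed
  obtain \<eta> where etapos: "\<eta> > 0" and etaB: "\<And>z. z \<in> B \<Longrightarrow> 2 * \<eta> \<le> Fr z - Fr x0"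
  proof (cases "B = {}")
    case True then show ?thesis using that[of 1] by simp
  next
    case False
    have "continuous_on K Fr"
    proof (rule lipschitz_on_continuous_on[of L])
      show "L-lipschitz_on K Fr" using FrLip by (intro lipschitz_onI) (auto simp: dist_real_def L0)
    qed
    then have "continuous_on B Fr" by (rule continuous_on_subset) (auto simp: K_def)
    then obtain zm where zm: "zm \<in> B" "\<And>y. y \<in> B \<Longrightarrow> Fr zm \<le> Fr y"
      using continuous_attains_inf[OF Bcomp False] by blast
    show ?thesis
    proof (rule that[of "(Fr zm - Fr x0) / 2"])
      show "(Fr zm - Fr x0) / 2 > 0" using FrB[OF zm(1)] by simp
      fix z assume "z \<in> B" then show "2 * ((Fr zm - Fr x0) / 2) \<le> Fr z - Fr x0" using zm(2) by simp
    qed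
  qed
  have FrE: "real_of_ereal (Fobj P f x) = Fr x" if "x \<in> D" for x using FobjE[OF that] by simp
  have chK: "\<exists>\<beta>>0. \<forall>N. measure (PiM {..<N} (\<lambda>_. P))
     {s\<in>space (PiM {..<N} (\<lambda>_. P)). real N * (\<eta>/2) \<le> (\<Sum>i<N. fr (s i) x - Fr x)} \<le> exp (- real N * \<beta>)
   \<and> measure (PiM {..<N} (\<lambda>_. P))
     {s\<in>space (PiM {..<N} (\<lambda>_. P)). (\<Sum>i<N. fr (s i) x - Fr x) \<le> - (real N * (\<eta>/2))} \<le> exp (- real N * \<beta>)"
    if xK: "x \<in> K" for x
  proof -
    have xD: "x \<in> D" using xK KD by auto
    obtain \<delta> where dpos: "\<delta> > 0" and mg: "\<forall>t. \<bar>t\<bar> < \<delta> \<longrightarrow>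
            (\<integral>\<^sup>+ \<omega>. ennreal (exp (t * (fr \<omega> x - Fr x))) \<partial>P) < \<infinity>"
    proof -
      have "\<exists>\<delta>>0. \<forall>t. \<bar>t\<bar> < \<delta> \<longrightarrow>
            (\<integral>\<^sup>+ \<omega>. ennreal (exp (t * (fr \<omega> x - real_of_ereal (Fobj P f x)))) \<partial>P) < \<infinity>"
        using mgfK xK by (rule bspec)
      then show ?thesis unfolding FrE[OF xD] using that by blast
    qed
    have hi: "integrable P (\<lambda>\<omega>. fr \<omega> x - Fr x)" using Fint[OF xD] by simp
    have h0: "(\<integral>\<omega>. fr \<omega> x - Fr x \<partial>P) = 0" using Fint[OF xD] unfolding Fr_def
      by (simp add: P.prob_space)
    have hm: "(\<lambda>\<omega>. fr \<omega> x - Fr x) \<in> borel_measurable P" by measurable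
    have e2: "\<eta> / 2 > 0" using etapos by simp
    show ?thesis by (rule chernoff_both[OF prob hm hi h0 dpos mg e2])
  qed
  have "\<forall>x\<in>K. \<exists>b. b > 0 \<and> (\<forall>N. measure (PiM {..<N} (\<lambda>_. P))
     {s\<in>space (PiM {..<N} (\<lambda>_. P)). real N * (\<eta>/2) \<le> (\<Sum>i<N. fr (s i) x - Fr x)} \<le> exp (- real N * b)
   \<and> measure (PiM {..<N} (\<lambda>_. P))
     {s\<in>space (PiM {..<N} (\<lambda>_. P)). (\<Sum>i<N. fr (s i) x - Fr x) \<le> - (real N * (\<eta>/2))} \<le> exp (- real N * b))"
    by (intro ballI chK)
  from bchoice[OF this] obtain \<beta>f where \<beta>fall: "\<forall>x\<in>K. \<beta>f x > 0 \<and> (\<forall>N. measure (PiM {..<N} (\<lambda>_. P))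
     {s\<in>space (PiM {..<N} (\<lambda>_. P)). real N * (\<eta>/2) \<le> (\<Sum>i<N. fr (s i) x - Fr x)} \<le> exp (- real N * \<beta>f x)
   \<and> measure (PiM {..<N} (\<lambda>_. P))
     {s\<in>space (PiM {..<N} (\<lambda>_. P)). (\<Sum>i<N. fr (s i) x - Fr x) \<le> - (real N * (\<eta>/2))} \<le> exp (- real N * \<beta>f x))"
    by (rule exE)
  have \<beta>f: "\<And>x. x \<in> K \<Longrightarrow> \<beta>f x > 0 \<and> (\<forall>N. measure (PiM {..<N} (\<lambda>_. P))
     {s\<in>space (PiM {..<N} (\<lambda>_. P)). real N * (\<eta>/2) \<le> (\<Sum>i<N. fr (s i) x - Fr x)} \<le> exp (- real N * \<beta>f x)
   \<and> measure (PiM {..<N} (\<lambda>_. P))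
     {s\<in>space (PiM {..<N} (\<lambda>_. P)). (\<Sum>i<N. fr (s i) x - Fr x) \<le> - (real N * (\<eta>/2))} \<le> exp (- real N * \<beta>f x))"
    using \<beta>fall by (rule bspec)
  obtain \<beta>k where \<beta>k: "\<beta>k > 0" "\<forall>N. measure (PiM {..<N} (\<lambda>_. P))
     {s\<in>space (PiM {..<N} (\<lambda>_. P)). real N * 1 \<le> (\<Sum>i<N. \<kappa> (s i) - L)} \<le> exp (- real N * \<beta>k)"
  proof -
    have mg: "\<forall>t. \<bar>t\<bar> < \<delta>\<kappa> \<longrightarrow> (\<integral>\<^sup>+ \<omega>. ennreal (exp (t * (\<kappa> \<omega> - L))) \<partial>P) < \<infinity>"
    proof (intro allI impI)
      fix t :: real assume t: "\<bar>t\<bar> < \<delta>\<kappa>"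
      have "(\<integral>\<^sup>+ \<omega>. ennreal (exp (t * (\<kappa> \<omega> - L))) \<partial>P)
          = (\<integral>\<^sup>+ \<omega>. ennreal (exp (- t * L)) * ennreal (exp (t * \<kappa> \<omega>)) \<partial>P)"
      proof (intro nn_integral_cong)
        fix \<omega>
        have "exp (t * (\<kappa> \<omega> - L)) = exp (- t * L) * exp (t * \<kappa> \<omega>)"
          by (simp add: right_diff_distrib flip: exp_add)
        then show "ennreal (exp (t * (\<kappa> \<omega> - L))) = ennreal (exp (- t * L)) * ennreal (exp (t * \<kappa> \<omega>))"
          by (simp add: ennreal_mult)
      qed
      also have "\<dots> = ennreal (exp (- t * L)) * (\<integral>\<^sup>+ \<omega>. ennreal (exp (t * \<kappa> \<omega>)) \<partial>P)"
        by (rule nn_integral_cmult) measurable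
      also have "\<dots> < \<infinity>" using mgfk t by (simp add: ennreal_mult_less_top)
      finally show "(\<integral>\<^sup>+ \<omega>. ennreal (exp (t * (\<kappa> \<omega> - L))) \<partial>P) < \<infinity>" .
    qed
    have hi: "integrable P (\<lambda>\<omega>. \<kappa> \<omega> - L)" using ki by simp
    have h0: "(\<integral>\<omega>. \<kappa> \<omega> - L \<partial>P) = 0" using ki unfolding L_def by (simp add: P.prob_space)
    have hm: "(\<lambda>\<omega>. \<kappa> \<omega> - L) \<in> borel_measurable P" by measurable
    obtain b where bb0: "b > 0 \<and> (\<forall>N. measure (PiM {..<N} (\<lambda>_. P))
     {s\<in>space (PiM {..<N} (\<lambda>_. P)). real N * 1 \<le> (\<Sum>i<N. \<kappa> (s i) - L)} \<le> exp (- real N * b)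
     \<and> measure (PiM {..<N} (\<lambda>_. P))
     {s\<in>space (PiM {..<N} (\<lambda>_. P)). (\<Sum>i<N. \<kappa> (s i) - L) \<le> - (real N * 1)} \<le> exp (- real N * b))"
      using chernoff_both[OF prob hm hi h0 dk mg zero_less_one] by (rule exE)
    note bb = conjunct2[OF bb0] and bpos = conjunct1[OF bb0]
    show ?thesis
    proof (rule that[OF bpos], intro allI)
      fix N show "measure (PiM {..<N} (\<lambda>_. P))
     {s\<in>space (PiM {..<N} (\<lambda>_. P)). real N * 1 \<le> (\<Sum>i<N. \<kappa> (s i) - L)} \<le> exp (- real N * b)"
        using bb[rule_format, of N] by (elim conjE)
    qed
  qed
  define r where "r = \<eta> / (L + 1)"
  have rpos: "r > 0" unfolding r_def using etapos L0 by simp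
  have rL: "r * (L + 1) = \<eta>" unfolding r_def using L0 by simp
  obtain T where Tfin: "finite T" and TB: "T \<subseteq> B" and Tcov: "B \<subseteq> (\<Union>c\<in>T. ball c r)"
  proof -
    have "\<exists>k. finite k \<and> k \<subseteq> B \<and> B \<subseteq> (\<Union>x\<in>k. ball x r)"
      using seq_compact_imp_totally_bounded[OF compact_imp_seq_compact[OF Bcomp], rule_format, OF rpos] .
    then show ?thesis using that by blast
  qed
  have TK: "T \<subseteq> K" using TB unfolding K_def by auto
  define \<beta> where "\<beta> = Min (insert \<beta>k (\<beta>f ` insert x0 T))"
  have \<beta>fpos: "\<beta>f c > 0" if "c \<in> K" for c using \<beta>f[OF that] by (rule conjunct1)
  have x0K: "x0 \<in> K" unfolding K_def by simp
  have \<beta>pos: "\<beta> > 0" unfolding \<beta>_def using Tfin \<beta>k(1) \<beta>fpos TK x0K by (simp add: Min_gr_iff subset_iff)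
  have \<beta>lek: "\<beta> \<le> \<beta>k" unfolding \<beta>_def using Tfin by simp
  have \<beta>lef: "\<beta> \<le> \<beta>f c" if "c \<in> insert x0 T" for c unfolding \<beta>_def
    by (rule Min_le) (use Tfin that in auto)
  define C where "C = real (card T) + 2"
  have Cpos: "C > 0" unfolding C_def by simp
  have fe: "f \<omega> w = ereal (fr \<omega> w)" if "\<omega> \<in> space P" "f \<omega> w \<noteq> \<infinity>" for \<omega> w
  proof -
    have "f \<omega> w \<noteq> -\<infinity>" using f_not_minf that(1) by blast
    then show ?thesis using that(2) unfolding fr_def by (cases "f \<omega> w") auto
  qed
  have main: "\<exists>A\<in>sets (PiM {..<N} (\<lambda>_. P)).
           {s \<in> space (PiM {..<N} (\<lambda>_. P)). feas_degree P f (xstar N s) < 1} \<subseteq> A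
           \<and> measure (PiM {..<N} (\<lambda>_. P)) A \<le> C * exp (- real N * \<beta>)" if Npos: "N > 0" for N
  proof -
    define Q where "Q = PiM {..<N} (\<lambda>_. P)"
    interpret Q: prob_space Q unfolding Q_def by (rule prob_space_PiM) (rule prob)
    define Ek where "Ek = {s\<in>space Q. real N * 1 \<le> (\<Sum>i<N. \<kappa> (s i) - L)}"
    define E0 where "E0 = {s\<in>space Q. real N * (\<eta>/2) \<le> (\<Sum>i<N. fr (s i) x0 - Fr x0)}"
    define Ec where "Ec = (\<lambda>c. {s\<in>space Q. (\<Sum>i<N. fr (s i) c - Fr c) \<le> - (real N * (\<eta>/2))})"
    define A where "A = Ek \<union> E0 \<union> (\<Union>c\<in>T. Ec c)"
    have Ekm: "Ek \<in> sets Q" unfolding Ek_def Q_def by measurable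
    have E0m: "E0 \<in> sets Q" unfolding E0_def Q_def by measurable
    have Ecm: "Ec c \<in> sets Q" for c unfolding Ec_def Q_def by measurable
    have EUm: "(\<Union>c\<in>T. Ec c) \<in> sets Q" using Ecm Tfin by (intro sets.finite_UN) auto
    have Am: "A \<in> sets Q" unfolding A_def using Ekm E0m EUm by auto
    have eb: "exp (- real N * b) \<le> exp (- real N * \<beta>)" if "\<beta> \<le> b" for b
      using that by (simp add: mult_left_mono)
    have mk: "measure Q Ek \<le> exp (- real N * \<beta>)"
      using \<beta>k(2)[rule_format, of N] eb[OF \<beta>lek] unfolding Ek_def Q_def by linarith
    have m0: "measure Q E0 \<le> exp (- real N * \<beta>)"
      using conjunct2[OF \<beta>f[OF x0K], THEN spec[of _ N], THEN conjunct1] eb[OF \<beta>lef[OF insertI1]]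
      unfolding E0_def Q_def by linarith
    have mc: "measure Q (Ec c) \<le> exp (- real N * \<beta>)" if "c \<in> T" for c
    proof -
      have cK: "c \<in> K" using that TK by auto
      show ?thesis
        using conjunct2[OF \<beta>f[OF cK], THEN spec[of _ N], THEN conjunct2] eb[OF \<beta>lef[OF insertI2[OF that]]]
        unfolding Ec_def Q_def by linarith
    qed
    have "measure Q A \<le> measure Q (Ek \<union> E0) + measure Q (\<Union>c\<in>T. Ec c)"
      unfolding A_def using Ekm E0m EUm by (intro measure_Un_le) auto
    also have "\<dots> \<le> (measure Q Ek + measure Q E0) + (\<Sum>c\<in>T. measure Q (Ec c))"
      using Ekm E0m Ecm Tfin by (intro add_mono measure_Un_le Q.finite_measure_subadditive_finite) auto
    also have "\<dots> \<le> (exp (- real N * \<beta>) + exp (- real N * \<beta>)) + (\<Sum>c\<in>T. exp (- real N * \<beta>))"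
      using mk m0 mc by (intro add_mono sum_mono) auto
    also have "\<dots> = C * exp (- real N * \<beta>)" unfolding C_def by (simp add: algebra_simps)
    finally have mA: "measure Q A \<le> C * exp (- real N * \<beta>)" .
    have incl: "s \<in> A" if sQ: "s \<in> space Q" and feas: "feas_degree P f (xstar N s) < 1" for s
    proof (rule ccontr)
      assume nA: "s \<notin> A"
      have si: "s i \<in> space P" if "i < N" for i using sQ that by (auto simp: Q_def space_PiM PiE_iff)
      have sQ': "s \<in> space (PiM {..<N} (\<lambda>_. P))" using sQ by (simp add: Q_def)
      define y where "y = xstar N s"
      note sy = saa_opt[rule_format, OF Npos sQ', folded y_def]
      have yX: "y \<in> X" and yfin: "saa_obj f N s y < \<infinity>"
        and ymin: "\<And>w. w \<in> X \<Longrightarrow> saa_obj f N s y \<le> saa_obj f N s w" using sy by auto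
      have yD: "y \<notin> D"
      proof
        assume yD: "y \<in> D"
        have "{\<omega> \<in> space P. f \<omega> y < \<infinity>} = space P" using domfin[OF yD] by (auto simp: less_le)
        then have "feas_degree P f y = 1" by (simp add: feas_degree_def P.prob_space)
        then show False using feas by (simp add: y_def)
      qed
      have ygt: "\<epsilon> \<le> infdist y S" using epsD yD by force
      define \<phi> where "\<phi> = (\<lambda>t::real. infdist ((1 - t) *\<^sub>R x0 + t *\<^sub>R y) S)"
      have cont: "continuous_on {0..1} \<phi>" unfolding \<phi>_def by (intro continuous_intros)
      have p0: "\<phi> 0 \<le> \<epsilon>" unfolding \<phi>_def using x0S epos by simp
      have p1: "\<epsilon> \<le> \<phi> 1" unfolding \<phi>_def using ygt by simp
      obtain t where t0: "0 \<le> t" and t1: "t \<le> 1" and pt: "\<phi> t = \<epsilon>"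
        using IVT'[of \<phi> 0 \<epsilon> 1, OF p0 p1 _ cont] by auto
      define z where "z = (1 - t) *\<^sub>R x0 + t *\<^sub>R y"
      have x0X: "x0 \<in> X" using x0S SX by auto
      have zX: "z \<in> X" unfolding z_def using t0 t1 by (intro convexD[OF X_convex x0X yX]) auto
      have zB: "z \<in> B" unfolding B_def using zX pt by (simp add: \<phi>_def z_def)
      have zD: "z \<in> D" and zK: "z \<in> K" using zB BD by (auto simp: K_def)
      obtain c where cT: "c \<in> T" and czr: "dist c z < r" using Tcov zB by auto
      have cB: "c \<in> B" and cK: "c \<in> K" and cD: "c \<in> D" using cT TB TK KD by auto
      have fy: "f (s i) y \<noteq> \<infinity>" if "i < N" for i
      proof
        assume inf: "f (s i) y = \<infinity>"
        have "(\<Sum>i<N. f (s i) y) = \<infinity>" using inf that by (subst sum_Pinfty) auto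
        then have "saa_obj f N s y = \<infinity>" using Npos by (simp add: saa_obj_def)
        then show False using yfin by simp
      qed
      define Sa where "Sa = (\<Sum>i<N. fr (s i) x0)"
      define Sb where "Sb = (\<Sum>i<N. fr (s i) y)"
      define Sz where "Sz = (\<Sum>i<N. fr (s i) z)"
      define Sc where "Sc = (\<Sum>i<N. fr (s i) c)"
      define Sk where "Sk = (\<Sum>i<N. \<kappa> (s i))"
      have conv_i: "fr (s i) z \<le> (1 - t) * fr (s i) x0 + t * fr (s i) y" if "i < N" for i
      proof -
        have "ext_convex (f (s i))" using f_convex si[OF that] by blast
        then have "f (s i) z \<le> ereal (1 - t) * f (s i) x0 + ereal t * f (s i) y"
          unfolding ext_convex_def z_def using t0 t1 by blast
        then show ?thesis
          using fe[OF si[OF that] domfin[OF zD si[OF that]]] fe[OF si[OF that] domfin[OF x0D si[OF that]]]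
            fe[OF si[OF that] fy[OF that]] by simp
      qed
      have Sz_le: "Sz \<le> (1 - t) * Sa + t * Sb"
      proof -
        have "Sz \<le> (\<Sum>i<N. (1 - t) * fr (s i) x0 + t * fr (s i) y)"
          unfolding Sz_def using conv_i by (intro sum_mono) auto
        also have "\<dots> = (1 - t) * Sa + t * Sb"
          by (simp add: Sa_def Sb_def sum.distrib sum_distrib_left)
        finally show ?thesis .
      qed
      have Sb_le: "Sb \<le> Sa"
      proof -
        have "(\<Sum>i<N. f (s i) y) = (\<Sum>i<N. ereal (fr (s i) y))"
          using fe[OF si fy] by (intro sum.cong) auto
        then have ey: "(\<Sum>i<N. f (s i) y) = ereal Sb" unfolding Sb_def by simp
        have "(\<Sum>i<N. f (s i) x0) = (\<Sum>i<N. ereal (fr (s i) x0))"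
          using fe[OF si domfin[OF x0D si]] by (intro sum.cong) auto
        then have ex: "(\<Sum>i<N. f (s i) x0) = ereal Sa" unfolding Sa_def by simp
        have "saa_obj f N s y \<le> saa_obj f N s x0" using ymin x0X by blast
        then have "Sb / real N \<le> Sa / real N" using Npos by (simp add: saa_obj_def ey ex)
        then show ?thesis using Npos by (simp add: divide_le_cancel)
      qed
      have Sz_Sa: "Sz \<le> Sa"
      proof -
        have "t * Sb \<le> t * Sa" using Sb_le t0 by (rule mult_left_mono)
        then show ?thesis using Sz_le by (simp add: algebra_simps)
      qed
      have lip_i: "fr (s i) c \<le> fr (s i) z + r * \<kappa> (s i)" if "i < N" for i
      proof -
        have "dist (fr (s i) c) (fr (s i) z) \<le> \<kappa> (s i) * dist c z"
          using klip si[OF that] cK zK by (intro lipschitz_onD) auto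
        also have "\<dots> \<le> \<kappa> (s i) * r" using k0 si[OF that] czr by (intro mult_left_mono) auto
        finally show ?thesis by (simp add: dist_real_def abs_le_iff algebra_simps)
      qed
      have Sc_le: "Sc \<le> Sz + r * Sk"
      proof -
        have "Sc \<le> (\<Sum>i<N. fr (s i) z + r * \<kappa> (s i))" unfolding Sc_def using lip_i by (intro sum_mono) auto
        also have "\<dots> = Sz + r * Sk" by (simp add: Sz_def Sk_def sum.distrib sum_distrib_left)
        finally show ?thesis .
      qed
      have nk: "Sk - real N * L < real N" using nA sQ unfolding A_def Ek_def Sk_def
        by (auto simp: sum_subtractf)
      have n0: "Sa - real N * Fr x0 < real N * (\<eta>/2)" using nA sQ unfolding A_def E0_def Sa_def
        by (auto simp: sum_subtractf)
      have nc: "Sc - real N * Fr c > - (real N * (\<eta>/2))" using nA sQ cT unfolding A_def Ec_def Sc_def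
        by (auto simp: sum_subtractf)
      have rk: "r * Sk \<le> r * (real N * (L + 1))" using nk rpos by (intro mult_left_mono) (auto simp: algebra_simps)
      have rk2: "r * (real N * (L + 1)) = real N * \<eta>"
      proof -
        have "r * (real N * (L + 1)) = real N * (r * (L + 1))" by (simp add: algebra_simps)
        then show ?thesis using rL by simp
      qed
      have gap: "real N * (2 * \<eta>) \<le> real N * (Fr c - Fr x0)" using etaB[OF cB] by (intro mult_left_mono) auto
      have e1: "real N * (2 * \<eta>) = 2 * (real N * \<eta>)" and e2: "real N * (\<eta>/2) = (real N * \<eta>) / 2"
        and e3: "real N * (Fr c - Fr x0) = real N * Fr c - real N * Fr x0" by (simp_all add: algebra_simps)
      show False using Sc_le Sz_Sa n0 nc rk rk2 gap e1 e2 e3 by linarith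
    qed
    show ?thesis unfolding Q_def[symmetric] using Am mA incl by blast
  qed
  show ?thesis using Cpos \<beta>pos main by blast
qed

end
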